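(* Let $X,Y$ be complex Banach spaces, $n\in\mathbb N$, let $F:\mathbb R^n\times X\to Y$ be continuous, let $\mathcal B$ be any family of compact subsets of $X$, and let $\mathrm R$ be the collection of all sequences in $\mathbb R^n$. Then $F$ is Bohr $\mathcal B$-almost periodic if and only if $F$ is $(\mathrm R,\mathcal B)$-multi-almost periodic.
   Context: $B(\mathbf t_0,l)$ is the closed Euclidean ball in $\mathbb R^n$. A continuous $F:\mathbb R^n\times X\to Y$ is Bohr $\mathcal B$-almost periodic if for every $B\in\mathcal B$ and $\epsilon>0$ there exists $l>0$ such that for each $\mathbf t_0\in\mathbb R^n$ there exists $\tau\in B(\mathbf t_0,l)$ with $\|F(\mathbf t+\tau;x)-F(\mathbf t;x)\|_Y\le\epsilon$ for all $\mathbf t\in\mathbb R^n$, $x\in B$. It is $(\mathrm R,\mathcal B)$-multi-almost periodic if for every $B\in\mathcal B$ and every sequence $(\mathbf b_k)\in\mathrm R$ there exist a subsequence $(\mathbf b_{k_l})$ and a function $F^\ast:\mathbb R^n\times X\to Y$ with $\lim_{l\to\infty}F(\mathbf t+\mathbf b_{k_l};x)=F^\ast(\mathbf t;x)$ uniformly for $x\in B$, $\mathbf t\in\mathbb R^n$. *)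

theory Defs
  imports "HOL-Analysis.Analysis"
begin

text \<open>Complex normed vector spaces: a real normed vector space with a compatible
  complex scalar multiplication (complex Banach space = this class plus banach).\<close>
class complex_normed_vector = real_normed_vector +
  fixes scaleC :: "complex \<Rightarrow> 'a \<Rightarrow> 'a"
  assumes scaleC_add_right: "scaleC a (x + y) = scaleC a x + scaleC a y"
    and scaleC_add_left: "scaleC (a + b) x = scaleC a x + scaleC b x"
    and scaleC_scaleC: "scaleC a (scaleC b x) = scaleC (a * b) x"
    and scaleC_one: "scaleC 1 x = x"
    and scaleC_of_real: "scaleC (complex_of_real r) x = scaleR r x"
    and norm_scaleC: "norm (scaleC a x) = cmod a * norm x"

text \<open>Bohr \<B>-almost periodicity; B(t0,l) is the closed Euclidean ball cball t0 l.\<close>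
definition bohr_B_almost_periodic ::
  "(real ^ 'n::finite \<Rightarrow> 'x \<Rightarrow> 'y::real_normed_vector) \<Rightarrow> 'x set set \<Rightarrow> bool" where
  "bohr_B_almost_periodic F \<B> \<longleftrightarrow>
     (\<forall>B\<in>\<B>. \<forall>\<epsilon>>0. \<exists>l>0. \<forall>t0. \<exists>\<tau>\<in>cball t0 l.
        \<forall>t. \<forall>x\<in>B. norm (F (t + \<tau>) x - F t x) \<le> \<epsilon>)"

definition R_B_multi_almost_periodic ::
  "(real ^ 'n::finite \<Rightarrow> 'x \<Rightarrow> 'y::real_normed_vector) \<Rightarrow> (nat \<Rightarrow> real ^ 'n) set
     \<Rightarrow> 'x set set \<Rightarrow> bool" where
  "R_B_multi_almost_periodic F R \<B> \<longleftrightarrow>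
     (\<forall>B\<in>\<B>. \<forall>b\<in>R. \<exists>r::nat \<Rightarrow> nat. strict_mono r \<and>
        (\<exists>Fs :: real ^ 'n \<Rightarrow> 'x \<Rightarrow> 'y.
           (\<forall>\<epsilon>>0. \<forall>\<^sub>F l in sequentially.
              \<forall>t. \<forall>x\<in>B. norm (F (t + b (r l)) x - Fs t x) < \<epsilon>)))"

end

theory Submission
  imports Defs
begin

lemma cball_shift:
  fixes t \<tau> :: "'a::real_normed_vector"
  assumes "\<tau> \<in> cball (-t) l"
  shows "norm (t + \<tau>) \<le> l" "t + \<tau> \<in> cball 0 l"
proof -
  have "-t - \<tau> = -(t + \<tau>)" by simp
  then have "norm (-t - \<tau>) = norm (t + \<tau>)" by (metis norm_minus_cancel)
  then show "norm (t + \<tau>) \<le> l" using assms by (simp add: dist_norm)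
  then show "t + \<tau> \<in> cball 0 l" by simp
qed

lemma ap_bounded:
  fixes F :: "real ^ 'n::finite \<Rightarrow> 'x::real_normed_vector \<Rightarrow> 'y::real_normed_vector"
  assumes cont: "continuous_on UNIV (\<lambda>(t, x). F t x)"
    and cB: "compact B"
    and ap: "\<forall>\<epsilon>>0. \<exists>l>0. \<forall>t0. \<exists>\<tau>\<in>cball t0 l. \<forall>t. \<forall>x\<in>B. norm (F (t + \<tau>) x - F t x) \<le> \<epsilon>"
  shows "\<exists>C. \<forall>t. \<forall>x\<in>B. norm (F t x) \<le> C"
proof -
  obtain l where l: "l > 0" "\<forall>t0. \<exists>\<tau>\<in>cball t0 l. \<forall>t. \<forall>x\<in>B. norm (F (t + \<tau>) x - F t x) \<le> 1"
    using ap by (meson zero_less_one)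
  have "compact (cball (0::real^'n) l \<times> B)" using cB by (simp add: compact_Times)
  moreover have "continuous_on (cball 0 l \<times> B) (\<lambda>(t, x). F t x)"
    by (rule continuous_on_subset[OF cont]) simp
  ultimately have "compact ((\<lambda>(t, x). F t x) ` (cball 0 l \<times> B))"
    using compact_continuous_image by blast
  then obtain C where C: "\<And>y. y \<in> (\<lambda>(t, x). F t x) ` (cball 0 l \<times> B) \<Longrightarrow> norm y \<le> C"
    using compact_imp_bounded bounded_iff by metis
  have "norm (F t x) \<le> C + 1" if x: "x \<in> B" for t x
  proof -
    obtain \<tau> where \<tau>: "\<tau> \<in> cball (-t) l" "\<forall>t. \<forall>x\<in>B. norm (F (t + \<tau>) x - F t x) \<le> 1"
      using l by blast
    have "t + \<tau> \<in> cball 0 l" using cball_shift[OF \<tau>(1)] by simp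
    then have "norm (F (t + \<tau>) x) \<le> C" using C x by force
    moreover have "norm (F (t + \<tau>) x - F t x) \<le> 1" using \<tau>(2) x by blast
    ultimately show ?thesis
      using norm_triangle_sub[of "F t x" "F (t+\<tau>) x"] norm_minus_commute[of "F t x" "F (t+\<tau>) x"]
      by linarith
  qed
  then show ?thesis by blast
qed

lemma ap_unif_cont:
  fixes F :: "real ^ 'n::finite \<Rightarrow> 'x::real_normed_vector \<Rightarrow> 'y::real_normed_vector"
  assumes cont: "continuous_on UNIV (\<lambda>(t, x). F t x)"
    and cB: "compact B"
    and ap: "\<forall>\<epsilon>>0. \<exists>l>0. \<forall>t0. \<exists>\<tau>\<in>cball t0 l. \<forall>t. \<forall>x\<in>B. norm (F (t + \<tau>) x - F t x) \<le> \<epsilon>"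
    and e: "e > 0"
  shows "\<exists>\<delta>>0. \<forall>t t'. \<forall>x\<in>B. dist t t' < \<delta> \<longrightarrow> norm (F t x - F t' x) \<le> e"
proof -
  obtain l where l: "l > 0" "\<forall>t0. \<exists>\<tau>\<in>cball t0 l. \<forall>t. \<forall>x\<in>B. norm (F (t + \<tau>) x - F t x) \<le> e/3"
  proof -
    have "e/3 > 0" using e by simp
    then show ?thesis using that mp[OF spec[OF ap, of "e/3"]] by blast
  qed
  let ?K = "cball (0::real^'n) (l+1) \<times> B"
  have "compact ?K" using cB by (simp add: compact_Times)
  moreover have "continuous_on ?K (\<lambda>(t, x). F t x)"
    by (rule continuous_on_subset[OF cont]) simp
  ultimately have "uniformly_continuous_on ?K (\<lambda>(t, x). F t x)"
    using compact_uniformly_continuous by blast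
  then obtain d where d: "d > 0" "\<forall>z\<in>?K. \<forall>z'\<in>?K. dist z' z < d \<longrightarrow>
      dist ((\<lambda>(t, x). F t x) z') ((\<lambda>(t, x). F t x) z) < e/3"
  proof -
    have e3: "e/3 > 0" using e by simp
    show ?thesis using that \<open>uniformly_continuous_on ?K (\<lambda>(t, x). F t x)\<close>[unfolded uniformly_continuous_on_def, rule_format, OF e3]
      by blast
  qed
  have "norm (F t x - F t' x) \<le> e" if x: "x \<in> B" and tt: "dist t t' < min d 1" for t t' x
  proof -
    obtain \<tau> where \<tau>: "\<tau> \<in> cball (-t) l" "\<forall>t. \<forall>x\<in>B. norm (F (t + \<tau>) x - F t x) \<le> e/3"
      using l by blast
    have n1: "norm (t + \<tau>) \<le> l" using cball_shift[OF \<tau>(1)] by simp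
    have "t' + \<tau> = (t + \<tau>) + (t' - t)" by simp
    then have "norm (t' + \<tau>) \<le> norm (t + \<tau>) + norm (t' - t)"
      by (metis norm_triangle_ineq)
    also have "norm (t' - t) < 1" using tt by (simp add: dist_norm norm_minus_commute)
    finally have n2: "norm (t' + \<tau>) \<le> l + 1" using n1 by simp
    have m1: "(t + \<tau>, x) \<in> ?K" "(t' + \<tau>, x) \<in> ?K" using n1 n2 x by auto
    have "dist (t + \<tau>, x) (t' + \<tau>, x) < d" using tt
      by (simp add: dist_Pair_Pair dist_norm)
    then have "dist (F (t + \<tau>) x) (F (t' + \<tau>) x) < e/3" using d(2) m1 by fastforce
    then have a: "norm (F (t + \<tau>) x - F (t' + \<tau>) x) < e/3" by (simp add: dist_norm)
    have b: "norm (F (t + \<tau>) x - F t x) \<le> e/3" using \<tau>(2) x by blast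
    have c: "norm (F (t' + \<tau>) x - F t' x) \<le> e/3" using \<tau>(2) x by blast
    have "norm (F t x - F t' x) \<le> norm (F (t + \<tau>) x - F t x) + norm (F (t + \<tau>) x - F (t' + \<tau>) x)
        + norm (F (t' + \<tau>) x - F t' x)"
    proof -
      have "F t x - F t' x = -(F (t + \<tau>) x - F t x) + (F (t + \<tau>) x - F (t' + \<tau>) x)
        + (F (t' + \<tau>) x - F t' x)" by (simp add: algebra_simps)
      then show ?thesis
        using norm_triangle_ineq[of "-(F (t + \<tau>) x - F t x)" "F (t + \<tau>) x - F (t' + \<tau>) x"]
          norm_triangle_ineq[of "-(F (t + \<tau>) x - F t x) + (F (t + \<tau>) x - F (t' + \<tau>) x)"
            "F (t' + \<tau>) x - F t' x"]
        by (simp only: norm_minus_cancel)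
    qed
    then show ?thesis using a b c by linarith
  qed
  then show ?thesis using d(1) by (intro exI[of _ "min d 1"]) auto
qed

lemma ap_totally_bounded:
  fixes F :: "real ^ 'n::finite \<Rightarrow> 'x::real_normed_vector \<Rightarrow> 'y::real_normed_vector"
  assumes cont: "continuous_on UNIV (\<lambda>(t, x). F t x)"
    and cB: "compact B"
    and ap: "\<forall>\<epsilon>>0. \<exists>l>0. \<forall>t0. \<exists>\<tau>\<in>cball t0 l. \<forall>t. \<forall>x\<in>B. norm (F (t + \<tau>) x - F t x) \<le> \<epsilon>"
    and e: "e > 0"
  shows "\<exists>K. finite K \<and> (\<forall>s. \<exists>s'\<in>K. \<forall>t. \<forall>x\<in>B. norm (F (t + s) x - F (t + s') x) \<le> e)"
proof -
  have e2: "e/2 > 0" using e by simp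
  obtain l where l: "l > 0" "\<forall>t0. \<exists>\<tau>\<in>cball t0 l. \<forall>t. \<forall>x\<in>B. norm (F (t + \<tau>) x - F t x) \<le> e/2"
    using mp[OF spec[OF ap, of "e/2"] e2] by blast
  from ap_unif_cont[OF cont cB ap e2] obtain d
    where d: "d > 0" "\<forall>t t'. \<forall>x\<in>B. dist t t' < d \<longrightarrow> norm (F t x - F t' x) \<le> e/2"
    by blast
  have cpt: "compact (cball (0::real^'n) l)" by simp
  have cov: "cball (0::real^'n) l \<subseteq> (\<Union>c\<in>cball 0 l. ball c d)"
  proof
    fix z assume "z \<in> cball (0::real^'n) l"
    moreover have "z \<in> ball z d" using d(1) by simp
    ultimately show "z \<in> (\<Union>c\<in>cball 0 l. ball c d)" by (rule UN_I)
  qed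
  have op: "\<And>c. c \<in> cball (0::real^'n) l \<Longrightarrow> open (ball c d)" by simp
  obtain K where K: "K \<subseteq> cball (0::real^'n) l" "finite K" "cball 0 l \<subseteq> (\<Union>c\<in>K. ball c d)"
    by (rule compactE_image[OF cpt op cov]) blast
  have "\<exists>s'\<in>K. \<forall>t. \<forall>x\<in>B. norm (F (t + s) x - F (t + s') x) \<le> e" for s
  proof -
    obtain \<tau> where \<tau>: "\<tau> \<in> cball (-s) l" "\<forall>t. \<forall>x\<in>B. norm (F (t + \<tau>) x - F t x) \<le> e/2"
      using spec[OF l(2), of "-s"] by (elim bexE) simp
    have "s + \<tau> \<in> cball 0 l" using cball_shift[OF \<tau>(1)] by simp
    then obtain s' where s': "s' \<in> K" "dist s' (s + \<tau>) < d" using K(3) by auto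
    have "norm (F (t + s) x - F (t + s') x) \<le> e" if x: "x \<in> B" for t x
    proof -
      have a: "norm (F (t + s + \<tau>) x - F (t + s) x) \<le> e/2" using \<tau>(2)[rule_format, OF x, of "t + s"] by (simp add: add.assoc)
      have "t + s + \<tau> - (t + s') = (s + \<tau>) - s'" by (simp add: algebra_simps)
      then have "dist (t + s + \<tau>) (t + s') = dist (s + \<tau>) s'" unfolding dist_norm by (rule arg_cong)
      then have "dist (t + s + \<tau>) (t + s') < d" using s'(2) dist_commute[of s' "s + \<tau>"] by linarith
      then have b: "norm (F (t + s + \<tau>) x - F (t + s') x) \<le> e/2" using d(2)[rule_format, OF x] by blast
      have "F (t + s) x - F (t + s') x = -(F (t + s + \<tau>) x - F (t + s) x) + (F (t + s + \<tau>) x - F (t + s') x)"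
        by (simp add: algebra_simps)
      then have "norm (F (t + s) x - F (t + s') x) \<le> norm (F (t + s + \<tau>) x - F (t + s) x) + norm (F (t + s + \<tau>) x - F (t + s') x)"
        using norm_triangle_ineq[of "-(F (t + s + \<tau>) x - F (t + s) x)" "F (t + s + \<tau>) x - F (t + s') x"]
        by (simp only: norm_minus_cancel)
      with a b show ?thesis by linarith
    qed
    then have "\<forall>t. \<forall>x\<in>B. norm (F (t + s) x - F (t + s') x) \<le> e" by blast
    then show ?thesis using s'(1) by (rule bexI)
  qed
  then have "\<forall>s. \<exists>s'\<in>K. \<forall>t. \<forall>x\<in>B. norm (F (t + s) x - F (t + s') x) \<le> e" by (rule allI)
  then show ?thesis using K(2) by (intro exI[of _ K]) simp
qed

lemma ap_cauchy_subseq: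
  fixes F :: "real ^ 'n::finite \<Rightarrow> 'x::real_normed_vector \<Rightarrow> 'y::real_normed_vector"
    and b :: "nat \<Rightarrow> real ^ 'n"
  assumes tb: "\<And>e. e > 0 \<Longrightarrow> \<exists>K. finite K \<and> (\<forall>s. \<exists>s'\<in>K. \<forall>t. \<forall>x\<in>B. norm (F (t + s) x - F (t + s') x) \<le> e)"
    and bd: "\<forall>t. \<forall>x\<in>B. norm (F t x) \<le> C"
    and Bne: "B \<noteq> {}"
  shows "\<exists>r::nat \<Rightarrow> nat. strict_mono r \<and> (\<forall>e>0. \<exists>N. \<forall>m\<ge>N. \<forall>n\<ge>N. \<forall>t. \<forall>x\<in>B.
            norm (F (t + b (r m)) x - F (t + b (r n)) x) < e)"
proof -
  let ?S = "(UNIV :: (real^'n) set) \<times> B"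
  define g where "g s = restrict (\<lambda>(t, x). F (t + s) x) ?S" for s
  interpret FS: Metric_space "Met_TC.fspace ?S" "Met_TC.fdist ?S"
    by (rule Met_TC.Metric_space_funspace)
  have Sne: "?S \<noteq> {}" using Bne by simp
  have gin: "g s \<in> Met_TC.fspace ?S" for s
  proof -
    have "bounded (g s ` ?S)"
      unfolding bounded_iff using bd by (auto simp: g_def)
    then show ?thesis by (simp add: Met_TC.fspace_def g_def)
  qed
  have gle: "Met_TC.fdist ?S (g s) (g s') \<le> a \<longleftrightarrow> (\<forall>z\<in>?S. dist (g s z) (g s' z) \<le> a)" for s s' a
    using Met_TC.funspace_mdist_le[OF gin gin Sne] .
  have "FS.mtotally_bounded (range g)"
    unfolding FS.mtotally_bounded_def
  proof (intro allI impI)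
    fix e :: real assume e: "e > 0"
    obtain K where K: "finite K" "\<forall>s. \<exists>s'\<in>K. \<forall>t. \<forall>x\<in>B. norm (F (t + s) x - F (t + s') x) \<le> e/2"
      using tb[of "e/2"] e by auto
    have "range g \<subseteq> (\<Union>k\<in>g ` K. FS.mball k e)"
    proof
      fix f assume "f \<in> range g"
      then obtain s where s: "f = g s" by auto
      obtain s' where s': "s' \<in> K" "\<forall>t. \<forall>x\<in>B. norm (F (t + s) x - F (t + s') x) \<le> e/2"
        using K(2) by blast
      have "Met_TC.fdist ?S (g s') (g s) \<le> e/2"
        unfolding gle using s'(2) by (auto simp: g_def dist_norm norm_minus_commute)
      then have "g s \<in> FS.mball (g s') e" using gin e by simp
      then show "f \<in> (\<Union>k\<in>g ` K. FS.mball k e)" using s s'(1) by blast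
    qed
    then show "\<exists>K. finite K \<and> K \<subseteq> range g \<and> range g \<subseteq> (\<Union>x\<in>K. FS.mball x e)"
      using K(1) by (intro exI[of _ "g ` K"]) auto
  qed
  then have tbs: "\<forall>\<sigma>::nat \<Rightarrow> _. range \<sigma> \<subseteq> range g \<longrightarrow> (\<exists>r. strict_mono r \<and> FS.MCauchy (\<sigma> \<circ> r))"
    unfolding FS.mtotally_bounded_sequentially by (rule conjunct2)
  have rg: "range (g \<circ> b) \<subseteq> range g" by auto
  obtain r where r: "strict_mono r" "FS.MCauchy ((g \<circ> b) \<circ> r)"
    using tbs[rule_format, OF rg] by blast
  have "\<exists>N. \<forall>m\<ge>N. \<forall>n\<ge>N. \<forall>t. \<forall>x\<in>B. norm (F (t + b (r m)) x - F (t + b (r n)) x) < e" if e: "e > 0" for e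
  proof -
    have "\<forall>\<epsilon>>0. \<exists>N. \<forall>n n'. N \<le> n \<longrightarrow> N \<le> n' \<longrightarrow> Met_TC.fdist ?S (((g \<circ> b) \<circ> r) n) (((g \<circ> b) \<circ> r) n') < \<epsilon>"
      using r(2) unfolding FS.MCauchy_def by (rule conjunct2)
    then obtain N where N: "\<forall>n n'. N \<le> n \<longrightarrow> N \<le> n' \<longrightarrow> Met_TC.fdist ?S (((g \<circ> b) \<circ> r) n) (((g \<circ> b) \<circ> r) n') < e"
      using e by blast
    have "norm (F (t + b (r m)) x - F (t + b (r n)) x) < e" if "m \<ge> N" "n \<ge> N" "x \<in> B" for m n t x
    proof -
      have "dist (g (b (r m)) (t, x)) (g (b (r n)) (t, x)) \<le> Met_TC.fdist ?S (g (b (r m))) (g (b (r n)))"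
        using gle[of "b (r m)" "b (r n)" "Met_TC.fdist ?S (g (b (r m))) (g (b (r n)))"] that by auto
      moreover have "Met_TC.fdist ?S (g (b (r m))) (g (b (r n))) < e" using N that(1,2) by simp
      ultimately show ?thesis using that by (simp add: g_def dist_norm)
    qed
    then show ?thesis by blast
  qed
  then have "\<forall>e>0. \<exists>N. \<forall>m\<ge>N. \<forall>n\<ge>N. \<forall>t. \<forall>x\<in>B. norm (F (t + b (r m)) x - F (t + b (r n)) x) < e"
    by blast
  with r(1) show ?thesis by blast
qed

lemma forward_dir:
  fixes F :: "real ^ 'n::finite \<Rightarrow> 'x::real_normed_vector \<Rightarrow> 'y::banach"
    and b :: "nat \<Rightarrow> real ^ 'n"
  assumes cont: "continuous_on UNIV (\<lambda>(t, x). F t x)"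
    and cB: "compact B"
    and ap: "\<forall>\<epsilon>>0. \<exists>l>0. \<forall>t0. \<exists>\<tau>\<in>cball t0 l. \<forall>t. \<forall>x\<in>B. norm (F (t + \<tau>) x - F t x) \<le> \<epsilon>"
  shows "\<exists>r::nat \<Rightarrow> nat. strict_mono r \<and>
        (\<exists>Fs :: real ^ 'n \<Rightarrow> 'x \<Rightarrow> 'y.
           (\<forall>\<epsilon>>0. \<forall>\<^sub>F l in sequentially.
              \<forall>t. \<forall>x\<in>B. norm (F (t + b (r l)) x - Fs t x) < \<epsilon>))"
proof (cases "B = {}")
  case True
  show ?thesis
  proof (intro exI[of _ "id :: nat \<Rightarrow> nat"] conjI)
    show "strict_mono (id :: nat \<Rightarrow> nat)" by (simp add: strict_mono_def)
    show "\<exists>Fs :: real ^ 'n \<Rightarrow> 'x \<Rightarrow> 'y. \<forall>\<epsilon>>0. \<forall>\<^sub>F l in sequentially.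
              \<forall>t. \<forall>x\<in>B. norm (F (t + b (id l)) x - Fs t x) < \<epsilon>"
      using True by simp
  qed
next
  case False
  obtain C where C: "\<forall>t. \<forall>x\<in>B. norm (F t x) \<le> C" using ap_bounded[OF cont cB ap] by blast
  have tb: "\<exists>K. finite K \<and> (\<forall>s. \<exists>s'\<in>K. \<forall>t. \<forall>x\<in>B. norm (F (t + s) x - F (t + s') x) \<le> e)"
    if "e > 0" for e
    using ap_totally_bounded[OF cont cB ap that] .
  obtain r :: "nat \<Rightarrow> nat" where r: "strict_mono r" "\<forall>e>0. \<exists>N. \<forall>m\<ge>N. \<forall>n\<ge>N. \<forall>t. \<forall>x\<in>B.
            norm (F (t + b (r m)) x - F (t + b (r n)) x) < e"
  proof -
    have "\<exists>r::nat \<Rightarrow> nat. strict_mono r \<and> (\<forall>e>0. \<exists>N. \<forall>m\<ge>N. \<forall>n\<ge>N. \<forall>t. \<forall>x\<in>B.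
            norm (F (t + b (r m)) x - F (t + b (r n)) x) < e)"
    proof (rule ap_cauchy_subseq)
      show "\<exists>K. finite K \<and> (\<forall>s. \<exists>s'\<in>K. \<forall>t. \<forall>x\<in>B. norm (F (t + s) x - F (t + s') x) \<le> e)"
        if "e > 0" for e by (rule tb[OF that])
      show "\<forall>t. \<forall>x\<in>B. norm (F t x) \<le> C" by (rule C)
      show "B \<noteq> {}" by (rule False)
    qed
    then show ?thesis using that by blast
  qed
  define f where "f k z = F (fst z + b (r k)) (snd z)" for k z
  have "uniformly_Cauchy_on (UNIV \<times> B) f"
    unfolding uniformly_Cauchy_on_def
  proof (intro allI impI)
    fix e :: real assume "e > 0"
    then obtain N where N: "\<forall>m\<ge>N. \<forall>n\<ge>N. \<forall>t. \<forall>x\<in>B. norm (F (t + b (r m)) x - F (t + b (r n)) x) < e"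
      using r(2) by blast
    show "\<exists>M. \<forall>z\<in>UNIV \<times> B. \<forall>m\<ge>M. \<forall>n\<ge>M. dist (f m z) (f n z) < e"
    proof (intro exI[of _ N] ballI allI impI)
      fix z :: "(real^'n) \<times> 'x" and m n assume "z \<in> UNIV \<times> B" "N \<le> m" "N \<le> n"
      then show "dist (f m z) (f n z) < e" using N by (auto simp: f_def dist_norm)
    qed
  qed
  then have "uniformly_convergent_on (UNIV \<times> B) f" by (rule Cauchy_uniformly_convergent)
  then obtain lf where lf: "uniform_limit (UNIV \<times> B) f lf sequentially"
    unfolding uniformly_convergent_on_def by blast
  have FsH: "\<forall>\<epsilon>>0. \<forall>\<^sub>F l in sequentially. \<forall>t. \<forall>x\<in>B. norm (F (t + b (r l)) x - (\<lambda>t x. lf (t, x)) t x) < \<epsilon>"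
  proof (intro allI impI)
    fix \<epsilon> :: real assume "\<epsilon> > 0"
    then have "\<forall>\<^sub>F n in sequentially. \<forall>z\<in>UNIV \<times> B. dist (f n z) (lf z) < \<epsilon>"
      using lf unfolding uniform_limit_iff by blast
    then show "\<forall>\<^sub>F l in sequentially. \<forall>t. \<forall>x\<in>B. norm (F (t + b (r l)) x - (\<lambda>t x. lf (t, x)) t x) < \<epsilon>"
    proof (rule eventually_mono)
      fix n assume H: "\<forall>z\<in>UNIV \<times> B. dist (f n z) (lf z) < \<epsilon>"
      show "\<forall>t. \<forall>x\<in>B. norm (F (t + b (r n)) x - (\<lambda>t x. lf (t, x)) t x) < \<epsilon>"
      proof (intro allI ballI)
        fix t x assume "x \<in> B"
        then have "dist (f n (t, x)) (lf (t, x)) < \<epsilon>" using H by blast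
        then show "norm (F (t + b (r n)) x - (\<lambda>t x. lf (t, x)) t x) < \<epsilon>"
          by (simp add: f_def dist_norm)
      qed
    qed
  qed
  show ?thesis
  proof (intro exI[of _ r] conjI)
    show "strict_mono r" by (rule r(1))
    show "\<exists>Fs :: real ^ 'n \<Rightarrow> 'x \<Rightarrow> 'y. \<forall>\<epsilon>>0. \<forall>\<^sub>F l in sequentially.
              \<forall>t. \<forall>x\<in>B. norm (F (t + b (r l)) x - Fs t x) < \<epsilon>"
      by (rule exI[of _ "\<lambda>t x. lf (t, x)"]) (rule FsH)
  qed
qed

lemma backward_dir:
  fixes F :: "real ^ 'n::finite \<Rightarrow> 'x \<Rightarrow> 'y::real_normed_vector"
  assumes mp: "\<forall>b::nat \<Rightarrow> real ^ 'n. \<exists>r::nat \<Rightarrow> nat. strict_mono r \<and>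
        (\<exists>Fs :: real ^ 'n \<Rightarrow> 'x \<Rightarrow> 'y.
           (\<forall>\<epsilon>>0. \<forall>\<^sub>F l in sequentially.
              \<forall>t. \<forall>x\<in>B. norm (F (t + b (r l)) x - Fs t x) < \<epsilon>))"
    and e: "\<epsilon> > 0"
  shows "\<exists>l>0. \<forall>t0. \<exists>\<tau>\<in>cball t0 l. \<forall>t. \<forall>x\<in>B. norm (F (t + \<tau>) x - F t x) \<le> \<epsilon>"
proof (rule ccontr)
  assume neg: "\<not> ?thesis"
  have "\<forall>l. \<exists>t0. l > 0 \<longrightarrow> (\<forall>\<tau>\<in>cball t0 l. \<exists>t. \<exists>x\<in>B. \<epsilon> < norm (F (t + \<tau>) x - F t x))"
    using neg by (auto simp: not_le)
  from choice[OF this] obtain c where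
    c: "\<forall>l. l > 0 \<longrightarrow> (\<forall>\<tau>\<in>cball (c l) l. \<exists>t. \<exists>x\<in>B. \<epsilon> < norm (F (t + \<tau>) x - F t x))" ..
  define g where "g = rec_nat (c 1, norm (c 1) + 1) (\<lambda>k p. (c (snd p), max (snd p) (norm (c (snd p))) + 1))"
  have g0: "g 0 = (c 1, norm (c 1) + 1)" by (simp add: g_def)
  have gS: "g (Suc k) = (c (snd (g k)), max (snd (g k)) (norm (c (snd (g k)))) + 1)" for k
    by (simp add: g_def)
  define h where "h k = fst (g k)" for k
  define L where "L k = snd (g k)" for k
  have hS: "h (Suc k) = c (L k)" for k by (simp add: h_def L_def gS)
  have LS: "L k + 1 \<le> L (Suc k)" "norm (h (Suc k)) + 1 \<le> L (Suc k)" for k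
    by (simp_all add: h_def L_def gS)
  have hL: "norm (h k) \<le> L k" for k
  proof (cases k)
    case 0 then show ?thesis by (simp add: h_def L_def g0)
  next
    case (Suc k') then show ?thesis using LS(2)[of k'] by simp
  qed
  have Lpos: "L k > 0" for k
  proof (induction k)
    case 0 then show ?case by (simp add: L_def g0) (smt (verit) norm_ge_zero)
  next
    case (Suc k) then show ?case using LS(1)[of k] by simp
  qed
  have Lstep: "L n \<le> L (Suc n)" for n using LS(1)[of n] by simp
  have Lmono: "L i \<le> L k" if "i \<le> k" for i k
    by (rule lift_Suc_mono_le[of L, OF Lstep that])
  have key: "\<exists>t. \<exists>x\<in>B. \<epsilon> < norm (F (t + h j) x - F (t + h i) x)" if ij: "i < j" for i j
  proof -
    obtain k where k: "j = Suc k" using ij by (cases j) auto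
    have ik: "i \<le> k" using ij k by simp
    define \<tau> where "\<tau> = h j - h i"
    have "dist (c (L k)) \<tau> = norm (h i)" by (simp add: \<tau>_def dist_norm k hS)
    also have "\<dots> \<le> L k" using hL[of i] Lmono[OF ik] by simp
    finally have "\<tau> \<in> cball (c (L k)) (L k)" by simp
    then obtain t x where x: "x \<in> B" "\<epsilon> < norm (F (t + \<tau>) x - F t x)"
      using c Lpos[of k] by blast
    have eq1: "t - h i + h j = t + \<tau>" by (simp add: \<tau>_def)
    have eq2: "t - h i + h i = t" by simp
    show ?thesis
      by (intro exI[of _ "t - h i"] bexI[of _ x]) (simp_all only: eq1 eq2 x)
  qed
  obtain r :: "nat \<Rightarrow> nat" and Fs where r: "strict_mono r"
    "\<forall>\<epsilon>>0. \<forall>\<^sub>F l in sequentially. \<forall>t. \<forall>x\<in>B. norm (F (t + h (r l)) x - Fs t x) < \<epsilon>"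
    using spec[OF mp, of h] by blast
  have "\<epsilon>/2 > 0" using e by simp
  then have "\<forall>\<^sub>F l in sequentially. \<forall>t. \<forall>x\<in>B. norm (F (t + h (r l)) x - Fs t x) < \<epsilon>/2"
    using r(2) by blast
  then obtain N where N: "\<forall>n\<ge>N. \<forall>t. \<forall>x\<in>B. norm (F (t + h (r n)) x - Fs t x) < \<epsilon>/2"
    unfolding eventually_sequentially by blast
  have "r N < r (Suc N)" using r(1) by (simp add: strict_mono_def)
  then obtain t x where x: "x \<in> B" "\<epsilon> < norm (F (t + h (r (Suc N))) x - F (t + h (r N)) x)"
    using key by blast
  have a: "norm (F (t + h (r (Suc N))) x - Fs t x) < \<epsilon>/2" using N x(1) by simp
  have b: "norm (F (t + h (r N)) x - Fs t x) < \<epsilon>/2" using N x(1) by simp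
  have "F (t + h (r (Suc N))) x - F (t + h (r N)) x
      = (F (t + h (r (Suc N))) x - Fs t x) - (F (t + h (r N)) x - Fs t x)" by simp
  then have "norm (F (t + h (r (Suc N))) x - F (t + h (r N)) x)
      \<le> norm (F (t + h (r (Suc N))) x - Fs t x) + norm (F (t + h (r N)) x - Fs t x)"
    using norm_triangle_ineq4[of "F (t + h (r (Suc N))) x - Fs t x" "F (t + h (r N)) x - Fs t x"]
    by (simp only:)
  then show False using a b x(2) by linarith
qed

theorem theorem2p17:
  fixes F :: "real ^ 'n::finite \<Rightarrow> 'x::{complex_normed_vector,banach} \<Rightarrow> 'y::{complex_normed_vector,banach}"
    and \<B> :: "'x set set"
  assumes "continuous_on UNIV (\<lambda>(t, x). F t x)"
    and "\<forall>B\<in>\<B>. compact B"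
  shows "bohr_B_almost_periodic F \<B> \<longleftrightarrow> R_B_multi_almost_periodic F UNIV \<B>"
proof
  assume H: "bohr_B_almost_periodic F \<B>"
  show "R_B_multi_almost_periodic F UNIV \<B>"
    unfolding R_B_multi_almost_periodic_def
  proof (intro ballI)
    fix B and b :: "nat \<Rightarrow> real ^ 'n" assume B: "B \<in> \<B>"
    have cB: "compact B" using assms(2) B by blast
    have ap: "\<forall>\<epsilon>>0. \<exists>l>0. \<forall>t0. \<exists>\<tau>\<in>cball t0 l. \<forall>t. \<forall>x\<in>B. norm (F (t + \<tau>) x - F t x) \<le> \<epsilon>"
      using bspec[OF H[unfolded bohr_B_almost_periodic_def] B] .
    show "\<exists>r::nat \<Rightarrow> nat. strict_mono r \<and>
        (\<exists>Fs :: real ^ 'n \<Rightarrow> 'x \<Rightarrow> 'y.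
           (\<forall>\<epsilon>>0. \<forall>\<^sub>F l in sequentially.
              \<forall>t. \<forall>x\<in>B. norm (F (t + b (r l)) x - Fs t x) < \<epsilon>))"
      by (rule forward_dir[OF assms(1) cB ap])
  qed
next
  assume H: "R_B_multi_almost_periodic F UNIV \<B>"
  show "bohr_B_almost_periodic F \<B>"
    unfolding bohr_B_almost_periodic_def
  proof (intro ballI allI impI)
    fix B and \<epsilon> :: real assume B: "B \<in> \<B>" and e: "\<epsilon> > 0"
    have mp: "\<forall>b::nat \<Rightarrow> real ^ 'n. \<exists>r::nat \<Rightarrow> nat. strict_mono r \<and>
        (\<exists>Fs :: real ^ 'n \<Rightarrow> 'x \<Rightarrow> 'y.
           (\<forall>\<epsilon>>0. \<forall>\<^sub>F l in sequentially.
              \<forall>t. \<forall>x\<in>B. norm (F (t + b (r l)) x - Fs t x) < \<epsilon>))"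
      using bspec[OF H[unfolded R_B_multi_almost_periodic_def] B] by simp
    show "\<exists>l>0. \<forall>t0. \<exists>\<tau>\<in>cball t0 l. \<forall>t. \<forall>x\<in>B. norm (F (t + \<tau>) x - F t x) \<le> \<epsilon>"
      by (rule backward_dir[OF mp e])
  qed
qed

end
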